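(* Let $\rho\colon\mathcal{F}\to[\Lambda]^\omega$ with $\mathcal{F}\subseteq[\Omega]^\omega$ be a partition regular function which has small accretions. Consider the conditions: (1) $\mathrm{FinBW}(\rho)$ coincides with the class of all compact metric spaces in the realm of metric spaces, i.e. a metric space belongs to $\mathrm{FinBW}(\rho)$ if and only if it is compact; (2) $[0,1]\in\mathrm{FinBW}(\rho)$; (3) $\rho_{\mathrm{conv}}\not\leq_K\rho$. Then (1) and (2) are equivalent and imply (3). If moreover $\rho\in P^-$, then (1), (2), (3) are all equivalent.
   Context: All topological spaces are Hausdorff. An ideal on a set $X$: $\mathcal{I}\subseteq\mathcal{P}(X)$ with $\emptyset\in\mathcal{I}$, $X\notin\mathcal{I}$, closed under finite unions and subsets, containing all finite sets; $\mathcal{I}^+=\mathcal{P}(X)\setminus\mathcal{I}$. Partition regular function: $\Lambda,\Omega$ countably infinite, $\mathcal{F}$ a nonempty family of infinite subsets of $\Omega$ with $F\setminus K\in\mathcal{F}$ for $F\in\mathcal{F}$, $K$ finite; $\rho\colon\mathcal{F}\to[\Lambda]^\omega$ is partition regular if (M) $E\subseteq F\Rightarrow\rho(E)\subseteq\rho(F)$; (R) if $F\in\mathcal{F}$ and $\rho(F)=A\cup B$ then some $E\in\mathcal{F}$ has $\rho(E)\subseteq A$ or $\rho(E)\subseteq B$; (S) for every $E\in\mathcal{F}$ there is $F\in\mathcal{F}$, $F\subseteq E$, such that every $a\in\rho(F)$ satisfies $a\notin\rho(F\setminus K)$ for some finite $K\subseteq\Omega$. $\mathcal{I}_\rho=\{A\subseteq\Lambda:\forall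 F\in\mathcal{F}\ \rho(F)\not\subseteq A\}$. For an ideal $\mathcal{I}$ on a countable set $\Lambda$, $\rho_{\mathcal{I}}\colon\mathcal{I}^+\to[\Lambda]^\omega$, $\rho_{\mathcal{I}}(A)=A$ (with $\Omega=\Lambda$). $\rho$ has small accretions: for every $E\in\mathcal{F}$ there is $F\in\mathcal{F}$, $F\subseteq E$, with $\rho(F)\setminus\rho(F\setminus K)\in\mathcal{I}_\rho$ for all finite $K\subseteq\Omega$. $\rho\in P^-$: for every decreasing $A_0\supseteq A_1\supseteq\dots$ of subsets of $\Lambda$ with $A_0\notin\mathcal{I}_\rho$ and $A_n\setminus A_{n+1}\in\mathcal{I}_\rho$, there is $F\in\mathcal{F}$ with $\rho(F)\subseteq A_0$ such that for each $n$ some finite $K\subseteq\Omega$ has $\rho(F\setminus K)\subseteq A_n$. $\rho$-convergence and $\mathrm{FinBW}(\rho)$: $f\restriction\rho(F)$ ($f\colon\Lambda\to X$, $F\in\mathcal{F}$) $\rho$-converges to $x$ if for every neighborhood $U$ of $x$ some finite $K\subseteq\Omega$ has $f[\rho(F\setminus K)]\subseteq U$; $\mathrm{FinBW}(\rho)$ is the class of spaces $X$ such that for every $f\colon\Lambda\to X$ some $F\in\mathcal{F}$ makes $f\restriction\rho(F)$ $\rho$-convergent to a point of $X$. Katětov order: $\rho_2\leq_K\rho_1$ if there is $f\colon\Lambda_1\to\Lambda_2$ such that for every $F_1\in\mathcal{F}_1$ there is $F_2\in\mathcal{F}_2$ such that for every finite $K_1\subseteq\Omega_1$ there is a finite $K_2\subseteq\Omega_2$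 with $\rho_2(F_2\setminus K_2)\subseteq f[\rho_1(F_1\setminus K_1)]$. $\mathrm{conv}$ is the ideal on $\mathbb{Q}\cap[0,1]$ of all sets covered by the ranges of finitely many sequences in $\mathbb{Q}\cap[0,1]$ convergent in $[0,1]$. *)

theory Defs
  imports "HOL-Analysis.Analysis"
begin

definition partition_regular ::
  "'l set \<Rightarrow> 'o set \<Rightarrow> 'o set set \<Rightarrow> ('o set \<Rightarrow> 'l set) \<Rightarrow> bool" where
  "partition_regular \<Lambda> \<Omega> FF \<rho> \<longleftrightarrow>
     countable \<Lambda> \<and> infinite \<Lambda> \<and> countable \<Omega> \<and> infinite \<Omega> \<and>
     FF \<noteq> {} \<and>
     (\<forall>F\<in>FF. F \<subseteq> \<Omega> \<and> infinite F) \<and>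
     (\<forall>F\<in>FF. \<forall>K. finite K \<longrightarrow> F - K \<in> FF) \<and>
     (\<forall>F\<in>FF. \<rho> F \<subseteq> \<Lambda> \<and> infinite (\<rho> F)) \<and>
     (\<forall>E\<in>FF. \<forall>F\<in>FF. E \<subseteq> F \<longrightarrow> \<rho> E \<subseteq> \<rho> F) \<and>
     (\<forall>F\<in>FF. \<forall>A B. \<rho> F = A \<union> B \<longrightarrow> (\<exists>E\<in>FF. \<rho> E \<subseteq> A \<or> \<rho> E \<subseteq> B)) \<and>
     (\<forall>E\<in>FF. \<exists>F\<in>FF. F \<subseteq> E \<and>
        (\<forall>a\<in>\<rho> F. \<exists>K. finite K \<and> K \<subseteq> \<Omega> \<and> a \<notin> \<rho> (F - K)))"

definition ideal_of_prf :: "'l set \<Rightarrow> 'o set set \<Rightarrow> ('o set \<Rightarrow> 'l set) \<Rightarrow> 'l set set" where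
  "ideal_of_prf \<Lambda> FF \<rho> = {A. A \<subseteq> \<Lambda> \<and> (\<forall>F\<in>FF. \<not> \<rho> F \<subseteq> A)}"

definition small_accretions ::
  "'l set \<Rightarrow> 'o set \<Rightarrow> 'o set set \<Rightarrow> ('o set \<Rightarrow> 'l set) \<Rightarrow> bool" where
  "small_accretions \<Lambda> \<Omega> FF \<rho> \<longleftrightarrow>
     (\<forall>E\<in>FF. \<exists>F\<in>FF. F \<subseteq> E \<and>
        (\<forall>K. finite K \<and> K \<subseteq> \<Omega> \<longrightarrow> \<rho> F - \<rho> (F - K) \<in> ideal_of_prf \<Lambda> FF \<rho>))"

definition P_minus ::
  "'l set \<Rightarrow> 'o set \<Rightarrow> 'o set set \<Rightarrow> ('o set \<Rightarrow> 'l set) \<Rightarrow> bool" where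
  "P_minus \<Lambda> \<Omega> FF \<rho> \<longleftrightarrow>
     (\<forall>A :: nat \<Rightarrow> 'l set.
        A 0 \<subseteq> \<Lambda> \<and> (\<forall>n. A (Suc n) \<subseteq> A n) \<and> A 0 \<notin> ideal_of_prf \<Lambda> FF \<rho> \<and>
        (\<forall>n. A n - A (Suc n) \<in> ideal_of_prf \<Lambda> FF \<rho>) \<longrightarrow>
        (\<exists>F\<in>FF. \<rho> F \<subseteq> A 0 \<and>
           (\<forall>n. \<exists>K. finite K \<and> K \<subseteq> \<Omega> \<and> \<rho> (F - K) \<subseteq> A n)))"

definition rho_converges ::
  "'o set \<Rightarrow> ('o set \<Rightarrow> 'l set) \<Rightarrow> 'a topology \<Rightarrow> ('l \<Rightarrow> 'a) \<Rightarrow> 'o set \<Rightarrow> 'a \<Rightarrow> bool" where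
  "rho_converges \<Omega> \<rho> X f F x \<longleftrightarrow>
     (\<forall>U. openin X U \<and> x \<in> U \<longrightarrow>
        (\<exists>K. finite K \<and> K \<subseteq> \<Omega> \<and> f ` \<rho> (F - K) \<subseteq> U))"

definition FinBW ::
  "'l set \<Rightarrow> 'o set \<Rightarrow> 'o set set \<Rightarrow> ('o set \<Rightarrow> 'l set) \<Rightarrow> 'a topology \<Rightarrow> bool" where
  "FinBW \<Lambda> \<Omega> FF \<rho> X \<longleftrightarrow>
     Hausdorff_space X \<and>
     (\<forall>f. f \<in> \<Lambda> \<rightarrow> topspace X \<longrightarrow>
        (\<exists>F\<in>FF. \<exists>x\<in>topspace X. rho_converges \<Omega> \<rho> X f F x))"

definition FinBW_metric_compact ::
  "'l set \<Rightarrow> 'o set \<Rightarrow> 'o set set \<Rightarrow> ('o set \<Rightarrow> 'l set) \<Rightarrow> 'a itself \<Rightarrow> bool" where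
  "FinBW_metric_compact \<Lambda> \<Omega> FF \<rho> _ \<longleftrightarrow>
     (\<forall>m :: 'a metric. FinBW \<Lambda> \<Omega> FF \<rho> (mtopology_of m) \<longleftrightarrow> compact_space (mtopology_of m))"

definition katetov_le ::
  "'l2 set \<Rightarrow> 'o2 set \<Rightarrow> 'o2 set set \<Rightarrow> ('o2 set \<Rightarrow> 'l2 set) \<Rightarrow>
   'l1 set \<Rightarrow> 'o1 set \<Rightarrow> 'o1 set set \<Rightarrow> ('o1 set \<Rightarrow> 'l1 set) \<Rightarrow> bool" where
  "katetov_le \<Lambda>2 \<Omega>2 FF2 \<rho>2 \<Lambda>1 \<Omega>1 FF1 \<rho>1 \<longleftrightarrow>
     (\<exists>f. f \<in> \<Lambda>1 \<rightarrow> \<Lambda>2 \<and>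
        (\<forall>F1\<in>FF1. \<exists>F2\<in>FF2. \<forall>K1. finite K1 \<and> K1 \<subseteq> \<Omega>1 \<longrightarrow>
           (\<exists>K2. finite K2 \<and> K2 \<subseteq> \<Omega>2 \<and> \<rho>2 (F2 - K2) \<subseteq> f ` \<rho>1 (F1 - K1))))"

definition Q01 :: "real set" where
  "Q01 = {q \<in> \<rat>. 0 \<le> q \<and> q \<le> 1}"

definition conv_ideal :: "real set set" where
  "conv_ideal = {A. A \<subseteq> Q01 \<and>
     (\<exists>S :: (nat \<Rightarrow> real) set. finite S \<and>
        (\<forall>s\<in>S. range s \<subseteq> Q01 \<and> (\<exists>x\<in>{0..1}. s \<longlonglongrightarrow> x)) \<and>
        A \<subseteq> \<Union> (range ` S))}"

definition conv_plus :: "real set set" where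
  "conv_plus = Pow Q01 - conv_ideal"

definition rho_conv :: "real set \<Rightarrow> real set" where
  "rho_conv A = A"

end

theory Submission
  imports Defs
begin



locale prfun =
  fixes \<Lambda> :: "'l set" and \<Omega> :: "'o set" and FF :: "'o set set" and \<rho> :: "'o set \<Rightarrow> 'l set"
  assumes hprf: "partition_regular \<Lambda> \<Omega> FF \<rho>"
begin

abbreviation "I \<equiv> ideal_of_prf \<Lambda> FF \<rho>"

lemma cL: "countable \<Lambda>" and iL: "infinite \<Lambda>" and cO: "countable \<Omega>" and iO: "infinite \<Omega>"
  and FFne: "FF \<noteq> {}"
  using hprf unfolding partition_regular_def by auto

lemma Fsub: "F \<in> FF \<Longrightarrow> F \<subseteq> \<Omega>" and Finf: "F \<in> FF \<Longrightarrow> infinite F"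
  using hprf unfolding partition_regular_def by auto

lemma Fminus: "F \<in> FF \<Longrightarrow> finite K \<Longrightarrow> F - K \<in> FF"
  using hprf unfolding partition_regular_def by auto

lemma rhosub: "F \<in> FF \<Longrightarrow> \<rho> F \<subseteq> \<Lambda>" and rhoinf: "F \<in> FF \<Longrightarrow> infinite (\<rho> F)"
  using hprf unfolding partition_regular_def by auto

lemma rhomono: "E \<in> FF \<Longrightarrow> F \<in> FF \<Longrightarrow> E \<subseteq> F \<Longrightarrow> \<rho> E \<subseteq> \<rho> F"
  using hprf unfolding partition_regular_def by auto

lemma rhoR: "F \<in> FF \<Longrightarrow> \<rho> F = A \<union> B \<Longrightarrow> \<exists>E\<in>FF. \<rho> E \<subseteq> A \<or> \<rho> E \<subseteq> B"
  using hprf unfolding partition_regular_def by blast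

lemma rhoS: "E \<in> FF \<Longrightarrow> \<exists>F\<in>FF. F \<subseteq> E \<and> (\<forall>a\<in>\<rho> F. \<exists>K. finite K \<and> K \<subseteq> \<Omega> \<and> a \<notin> \<rho> (F - K))"
  using hprf unfolding partition_regular_def by blast

lemma rho_minus_sub: "F \<in> FF \<Longrightarrow> finite K \<Longrightarrow> \<rho> (F - K) \<subseteq> \<rho> F"
  by (rule rhomono) (auto intro: Fminus)

lemma rho_minus_ne: "F \<in> FF \<Longrightarrow> finite K \<Longrightarrow> \<rho> (F - K) \<noteq> {}"
  using rhoinf[OF Fminus] by fastforce

lemma I_iff: "A \<in> I \<longleftrightarrow> A \<subseteq> \<Lambda> \<and> (\<forall>F\<in>FF. \<not> \<rho> F \<subseteq> A)"
  unfolding ideal_of_prf_def by auto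

lemma notI: "F \<in> FF \<Longrightarrow> \<rho> F \<subseteq> A \<Longrightarrow> A \<notin> I"
  unfolding ideal_of_prf_def by auto

lemma I_sub: "A \<in> I \<Longrightarrow> B \<subseteq> A \<Longrightarrow> B \<in> I"
  unfolding ideal_of_prf_def by blast

lemma I_Un: assumes "A \<in> I" "B \<in> I" shows "A \<union> B \<in> I"
proof (rule ccontr)
  assume "A \<union> B \<notin> I"
  with assms obtain F where F: "F \<in> FF" "\<rho> F \<subseteq> A \<union> B" unfolding ideal_of_prf_def by auto
  then have "\<rho> F = (\<rho> F \<inter> A) \<union> (\<rho> F \<inter> B)" by auto
  from rhoR[OF F(1) this] obtain E where "E \<in> FF" "\<rho> E \<subseteq> A \<or> \<rho> E \<subseteq> B" by auto
  with assms show False unfolding ideal_of_prf_def by auto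
qed

lemma I_finite: "finite A \<Longrightarrow> A \<subseteq> \<Lambda> \<Longrightarrow> A \<in> I"
  unfolding ideal_of_prf_def using rhoinf finite_subset by blast

lemma I_Union: "finite S \<Longrightarrow> (\<And>A. A \<in> S \<Longrightarrow> A \<in> I) \<Longrightarrow> \<Union>S \<in> I"
proof (induction S rule: finite_induct)
  case empty then show ?case using I_finite by auto
next
  case (insert x S) then show ?case using I_Un by auto
qed

lemma rho_notI: "F \<in> FF \<Longrightarrow> \<rho> F \<notin> I"
  using notI by blast


lemma subsingleton_finite: "(\<And>a b. a \<in> A \<Longrightarrow> b \<in> A \<Longrightarrow> a = b) \<Longrightarrow> finite A"
  by (metis finite.simps insertI1 subsetI subset_singletonD finite_subset)

lemma FinBW_imp_compact:
  fixes m :: "'a metric"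
  assumes "FinBW \<Lambda> \<Omega> FF \<rho> (mtopology_of m)"
  shows "compact_space (mtopology_of m)"
proof -
  interpret Metric_space "mspace m" "mdist m" by (rule Metric_space_mspace_mdist)
  have mt: "mtopology_of m = mtopology" by (simp add: mtopology_of_def)
  show ?thesis unfolding mt compact_space_eq_Bolzano_Weierstrass
  proof (intro allI impI, rule ccontr)
    fix S assume S: "S \<subseteq> mspace m \<and> infinite S" and D: "\<not> mtopology derived_set_of S \<noteq> {}"
    obtain h :: "nat \<Rightarrow> 'a" where h: "inj h" "range h \<subseteq> S" using infinite_countable_subset S by blast
    define f where "f = h \<circ> to_nat_on \<Lambda>"
    have finj: "inj_on f \<Lambda>" unfolding f_def
      using comp_inj_on[OF inj_on_to_nat_on[OF cL] inj_on_subset[OF h(1)]] by simp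
    have fS: "f a \<in> S" for a using h unfolding f_def by auto
    then have "f \<in> \<Lambda> \<rightarrow> topspace (mtopology_of m)" using S by auto
    with assms obtain F x where F: "F \<in> FF" "x \<in> mspace m" "rho_converges \<Omega> \<rho> (mtopology_of m) f F x"
      unfolding FinBW_def by auto
    from D F(2) obtain T where T: "x \<in> T" "openin mtopology T" "\<forall>y. y \<in> S \<and> y \<in> T \<longrightarrow> y = x"
      unfolding derived_set_of_def by (auto, meson)
    from F(3) T obtain K where K: "finite K" "K \<subseteq> \<Omega>" "f ` \<rho> (F - K) \<subseteq> T"
      unfolding rho_converges_def mt by auto
    have sub: "\<rho> (F - K) \<subseteq> {a \<in> \<Lambda>. f a = x}"
      using K(3) fS T(3) rhosub[OF Fminus[OF F(1) K(1)]] by auto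
    have "finite {a \<in> \<Lambda>. f a = x}"
      by (rule subsingleton_finite) (use finj in \<open>auto simp: inj_on_def\<close>)
    then show False using sub rhoinf[OF Fminus[OF F(1) K(1)]] finite_subset by blast
  qed
qed

end



lemma conv_of_tendsto:
  assumes "A \<subseteq> Q01" "x \<in> {0..1}" "\<forall>\<epsilon>>0. finite {q\<in>A. \<not> dist q x < \<epsilon>}"
  shows "A \<in> conv_ideal"
proof (cases "finite A")
  case True
  let ?S = "(\<lambda>q. \<lambda>n::nat. q) ` A"
  have "finite ?S" using True by simp
  moreover have "\<forall>s\<in>?S. range s \<subseteq> Q01 \<and> (\<exists>x\<in>{0..1}. s \<longlonglongrightarrow> x)"
  proof
    fix s assume "s \<in> ?S" then obtain q where q: "q \<in> A" "s = (\<lambda>n. q)" by auto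
    then have "q \<in> Q01" using assms(1) by auto
    then show "range s \<subseteq> Q01 \<and> (\<exists>x\<in>{0..1}. s \<longlonglongrightarrow> x)" using q
      by (auto simp: Q01_def intro!: bexI[of _ q])
  qed
  moreover have "A \<subseteq> \<Union> (range ` ?S)" by auto
  ultimately show ?thesis using assms(1) unfolding conv_ideal_def by blast
next
  case False
  have "A \<subseteq> \<rat>" using assms(1) unfolding Q01_def by auto
  then have cA: "countable A" using countable_rat countable_subset by auto
  let ?e = "from_nat_into A"
  have bij: "bij_betw ?e UNIV A" using bij_betw_from_nat_into[OF cA False] .
  have lim: "?e \<longlonglongrightarrow> x"
  proof (rule tendstoI)
    fix \<epsilon>::real assume "\<epsilon>>0"
    then have fin: "finite {q\<in>A. \<not> dist q x < \<epsilon>}" using assms(3) by auto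
    have eq: "{n. \<not> dist (?e n) x < \<epsilon>} = ?e -` {q\<in>A. \<not> dist q x < \<epsilon>}"
      using bij by (auto simp: bij_betw_def)
    have "finite {n. \<not> dist (?e n) x < \<epsilon>}" unfolding eq
      by (rule finite_vimageI[OF fin]) (use bij in \<open>simp add: bij_betw_def\<close>)
    then show "eventually (\<lambda>n. dist (?e n) x < \<epsilon>) sequentially"
      using eventually_cofinite cofinite_eq_sequentially by metis
  qed
  have "range ?e = A" using bij by (simp add: bij_betw_def)
  then show ?thesis unfolding conv_ideal_def using assms(1,2) lim
    by (intro CollectI conjI exI[of _ "{?e}"]) auto
qed

lemma metric_compact_real_imp_01:
  assumes "FinBW_metric_compact \<Lambda> \<Omega> FF \<rho> TYPE(real)"
  shows "FinBW \<Lambda> \<Omega> FF \<rho> (top_of_set {0..1::real})"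
proof -
  have "FinBW \<Lambda> \<Omega> FF \<rho> (mtopology_of (submetric euclidean_metric {0..1::real})) \<longleftrightarrow> compact_space (mtopology_of (submetric euclidean_metric {0..1::real}))"
    using assms unfolding FinBW_metric_compact_def by blast
  moreover have "mtopology_of (submetric euclidean_metric {0..1::real}) = top_of_set {0..1}"
    by (simp add: mtopology_of_submetric)
  moreover have "compact_space (top_of_set {0..1::real})" by (rule compact_space_subtopology) (simp add: compact_Icc)
  ultimately show ?thesis by simp
qed

lemma Q01_sub: "Q01 \<subseteq> {0..1}" unfolding Q01_def by auto

context prfun begin

lemma FinBW01_not_katetov:
  assumes "FinBW \<Lambda> \<Omega> FF \<rho> (top_of_set {0..1::real})"
  shows "\<not> katetov_le Q01 Q01 conv_plus rho_conv \<Lambda> \<Omega> FF \<rho>"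
proof
  assume "katetov_le Q01 Q01 conv_plus rho_conv \<Lambda> \<Omega> FF \<rho>"
  then obtain g where g: "g \<in> \<Lambda> \<rightarrow> Q01" and kat: "\<forall>F1\<in>FF. \<exists>F2\<in>conv_plus. \<forall>K1. finite K1 \<and> K1 \<subseteq> \<Omega> \<longrightarrow>
           (\<exists>K2. finite K2 \<and> K2 \<subseteq> Q01 \<and> rho_conv (F2 - K2) \<subseteq> g ` \<rho> (F1 - K1))"
    unfolding katetov_le_def by blast
  have "g \<in> \<Lambda> \<rightarrow> topspace (top_of_set {0..1::real})" using g Q01_sub by auto
  with assms obtain F x where F: "F\<in>FF" "x \<in> {0..1::real}" "rho_converges \<Omega> \<rho> (top_of_set {0..1}) g F x"
    unfolding FinBW_def by auto
  from bspec[OF kat F(1)] obtain F2 where F2: "F2 \<in> conv_plus" and P: "\<forall>K1. finite K1 \<and> K1 \<subseteq> \<Omega> \<longrightarrow>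
           (\<exists>K2. finite K2 \<and> K2 \<subseteq> Q01 \<and> rho_conv (F2 - K2) \<subseteq> g ` \<rho> (F - K1))" ..
  have "F2 \<in> conv_ideal"
  proof (rule conv_of_tendsto)
    show "F2 \<subseteq> Q01" using F2 unfolding conv_plus_def by auto
    show "x \<in> {0..1}" by fact
    show "\<forall>\<epsilon>>0. finite {q\<in>F2. \<not> dist q x < \<epsilon>}"
    proof (intro allI impI)
      fix \<epsilon>::real assume "\<epsilon>>0"
      have op: "openin (top_of_set {0..1}) ({0..1} \<inter> ball x \<epsilon>)" by (rule openin_open_Int) simp
      have xin: "x \<in> {0..1} \<inter> ball x \<epsilon>" using F(2) \<open>\<epsilon>>0\<close> by auto
      have rc: "\<forall>U. openin (top_of_set {0..1}) U \<and> x \<in> U \<longrightarrow> (\<exists>K. finite K \<and> K \<subseteq> \<Omega> \<and> g ` \<rho> (F - K) \<subseteq> U)"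
        using F(3) unfolding rho_converges_def .
      obtain K where K: "finite K" "K \<subseteq> \<Omega>" "g ` \<rho> (F - K) \<subseteq> {0..1} \<inter> ball x \<epsilon>"
        using rc[rule_format, OF conjI[OF op xin]] by (elim exE conjE)
      obtain K2 where K2: "finite K2" "rho_conv (F2 - K2) \<subseteq> g ` \<rho> (F - K)"
        using P[rule_format, OF conjI[OF K(1) K(2)]] by (elim exE conjE)
      have "{q\<in>F2. \<not> dist q x < \<epsilon>} \<subseteq> K2"
      proof
        fix q assume q: "q \<in> {q\<in>F2. \<not> dist q x < \<epsilon>}"
        show "q \<in> K2"
        proof (rule ccontr)
          assume "q \<notin> K2"
          then have "q \<in> rho_conv (F2 - K2)" using q unfolding rho_conv_def by auto
          then have "q \<in> ball x \<epsilon>" using K2(2) K(3) by blast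
          then show False using q by (simp add: dist_commute)
        qed
      qed
      then show "finite {q\<in>F2. \<not> dist q x < \<epsilon>}" using K2(1) finite_subset by blast
    qed
  qed
  then show False using F2 unfolding conv_plus_def by auto
qed

end



definition cw :: "(nat \<Rightarrow> bool) \<Rightarrow> nat \<Rightarrow> real" where
  "cw b k = (if b k then 2 / 3^(Suc k) else 0)"

definition HH :: "(nat \<Rightarrow> bool) \<Rightarrow> real" where
  "HH b = suminf (cw b)"

lemma geom_sums: "(\<lambda>k. 2 / 3^(Suc k) :: real) sums 1"
proof -
  have "(\<lambda>n. (1/3::real)^n) sums (1 / (1 - 1/3))" by (rule geometric_sums) simp
  then have "(\<lambda>n. (2/3) * (1/3::real)^n) sums ((2/3) * (1 / (1 - 1/3)))" by (rule sums_mult)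
  moreover have "(\<lambda>n. (2/3) * (1/3::real)^n) = (\<lambda>k. 2 / 3^(Suc k))"
    by (rule ext) (simp add: power_one_over)
  ultimately show ?thesis by simp
qed

lemma tail_sums: "(\<lambda>n. 2 / 3^(Suc (n + Suc j)) :: real) sums (1 / 3^(Suc j))"
proof -
  have "(\<lambda>n. (1 / 3^(Suc j)) * (2 / 3^(Suc n)) :: real) sums ((1 / 3^(Suc j)) * 1)"
    by (rule sums_mult[OF geom_sums])
  moreover have "(\<lambda>n. (1 / 3^(Suc j)) * (2 / 3^(Suc n)) :: real) = (\<lambda>n. 2 / 3^(Suc (n + Suc j)))"
    by (rule ext) (simp add: power_add)
  ultimately show ?thesis by simp
qed

lemma cw_nonneg: "0 \<le> cw b k" and cw_le: "cw b k \<le> 2 / 3^(Suc k)"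
  unfolding cw_def by auto

lemma summable_cw: "summable (cw b)"
  by (rule summable_comparison_test'[OF sums_summable[OF geom_sums]]) (use cw_nonneg cw_le in auto)

lemma HH_range: "0 \<le> HH b" "HH b \<le> 1"
proof -
  show "0 \<le> HH b" unfolding HH_def by (rule suminf_nonneg[OF summable_cw cw_nonneg])
  have "HH b \<le> (\<Sum>k. 2 / 3^(Suc k) :: real)" unfolding HH_def
    by (rule suminf_le[OF cw_le summable_cw sums_summable[OF geom_sums]])
  then show "HH b \<le> 1" using sums_unique[OF geom_sums] by simp
qed

lemma cantor_gap:
  assumes "\<forall>i<j. b i = b' i" "b j \<noteq> b' j"
  shows "1 / 3^(Suc j) \<le> \<bar>HH b - HH b'\<bar>"
proof -
  define d where "d k = cw b k - cw b' k" for k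
  have sd: "summable d" unfolding d_def by (intro summable_diff summable_cw)
  have D: "HH b - HH b' = suminf d" unfolding HH_def d_def by (rule suminf_diff[OF summable_cw summable_cw])
  have "suminf d = (\<Sum>n. d (n + j)) + (\<Sum>i<j. d i)" by (rule suminf_split_initial_segment[OF sd])
  moreover have "(\<Sum>i<j. d i) = 0" using assms(1) by (simp add: d_def cw_def)
  ultimately have D1: "suminf d = (\<Sum>n. d (n + j))" by simp
  have sdj: "summable (\<lambda>n. d (n + j))" by (rule summable_ignore_initial_segment[OF sd])
  have "(\<Sum>n. d (Suc n + j)) = (\<Sum>n. d (n + j)) - d (0 + j)"
    using suminf_split_head[OF sdj] by simp
  then have D2: "suminf d = d j + (\<Sum>n. d (n + Suc j))" using D1 by simp
  define T where "T = (\<Sum>n. d (n + Suc j))"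
  have sT: "summable (\<lambda>n. d (n + Suc j))" by (rule summable_ignore_initial_segment[OF sd])
  have bnd: "\<bar>d (n + Suc j)\<bar> \<le> 2 / 3^(Suc (n + Suc j))" for n
    using cw_nonneg[of b "n + Suc j"] cw_le[of b "n + Suc j"] cw_nonneg[of b' "n + Suc j"] cw_le[of b' "n + Suc j"]
    unfolding d_def by linarith
  have bnd2: "- (2 / 3^(Suc (n + Suc j))) \<le> d (n + Suc j)" for n
    using bnd[of n] by linarith
  have sw: "summable (\<lambda>n. 2 / 3^(Suc (n + Suc j)) :: real)" by (rule sums_summable[OF tail_sums])
  have "T \<le> (\<Sum>n. 2 / 3^(Suc (n + Suc j)))" unfolding T_def
    by (rule suminf_le[OF _ sT sw]) (use bnd in \<open>simp add: abs_le_iff\<close>)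
  moreover have "(\<Sum>n. - (2 / 3^(Suc (n + Suc j)))) \<le> T" unfolding T_def
    by (rule suminf_le[OF bnd2 summable_minus[OF sw] sT])
  moreover have "(\<Sum>n. 2 / 3^(Suc (n + Suc j)) :: real) = 1 / 3^(Suc j)" using sums_unique[OF tail_sums] by simp
  moreover have "(\<Sum>n. - (2 / 3^(Suc (n + Suc j))) :: real) = - (1 / 3^(Suc j))"
    using sums_unique[OF sums_minus[OF tail_sums]] by simp
  ultimately have Tb: "\<bar>T\<bar> \<le> 1 / 3^(Suc j)" by simp
  have dj: "\<bar>d j\<bar> = 2 / 3^(Suc j)" using assms(2) unfolding d_def cw_def by auto
  have "\<bar>HH b - HH b'\<bar> = \<bar>d j + T\<bar>" using D D2 T_def by simp
  moreover have "(2::real) / 3^(Suc j) = 2 * (1 / 3^(Suc j))" by simp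
  ultimately show ?thesis using Tb dj by linarith
qed

lemma cantor_agree:
  assumes "\<bar>HH b - HH b'\<bar> < 1 / 3^(Suc k)"
  shows "b k = b' k"
proof (rule ccontr)
  assume ne: "b k \<noteq> b' k"
  define j where "j = (LEAST j. b j \<noteq> b' j)"
  have jk: "j \<le> k" unfolding j_def using ne by (rule Least_le)
  have bj: "b j \<noteq> b' j" unfolding j_def using ne by (rule LeastI)
  have lt: "\<forall>i<j. b i = b' i" unfolding j_def using not_less_Least by blast
  have "1 / 3^(Suc j) \<le> \<bar>HH b - HH b'\<bar>" by (rule cantor_gap[OF lt bj])
  moreover have "(1::real) / 3^(Suc k) \<le> 1 / 3^(Suc j)"
    using jk by (intro divide_left_mono power_increasing) auto
  ultimately show False using assms by linarith
qed




context prfun begin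

lemma compact_FinBW:
  fixes m :: "'a metric"
  assumes F01: "FinBW \<Lambda> \<Omega> FF \<rho> (top_of_set {0..1::real})" and cpt: "compact_space (mtopology_of m)"
  shows "FinBW \<Lambda> \<Omega> FF \<rho> (mtopology_of m)"
proof -
  interpret Metric_space "mspace m" "mdist m" by (rule Metric_space_mspace_mdist)
  have mt: "mtopology_of m = mtopology" by (simp add: mtopology_of_def)
  have tb: "mtotally_bounded (mspace m)"
    using cpt unfolding mt compact_space_eq_mcomplete_mtotally_bounded by auto
  have "\<exists>C. finite C \<and> C \<subseteq> mspace m \<and> mspace m \<subseteq> (\<Union>x\<in>C. mball x (1/Suc n))" for n
  proof -
    have "(1::real)/Suc n > 0" by simp
    then show ?thesis using tb unfolding mtotally_bounded_def by (elim allE impE) auto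
  qed
  then obtain C where C: "\<And>n. finite (C n)" "\<And>n. C n \<subseteq> mspace m"
    "\<And>n. mspace m \<subseteq> (\<Union>x\<in>C n. mball x (1/Suc n))" by metis
  define ctr where "ctr n i = from_nat_into (C n) i" for n i
  define Bs where "Bs k = (case prod_decode k of (n,i) \<Rightarrow> if i < card (C n) then mball (ctr n i) (1/Suc n) else {})" for k
  define P where "P n = Suc (Max ((\<lambda>i. prod_encode (n,i)) ` {..<card (C n)} \<union> {0}))" for n
  have P: "prod_encode (n,i) < P n" if "i < card (C n)" for n i
  proof -
    have "prod_encode (n,i) \<le> Max ((\<lambda>i. prod_encode (n,i)) ` {..<card (C n)} \<union> {0})"
      by (rule Max_ge) (use that in auto)
    then show ?thesis unfolding P_def by simp
  qed
  show "FinBW \<Lambda> \<Omega> FF \<rho> (mtopology_of m)" unfolding FinBW_def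
  proof (intro conjI allI impI)
    show "Hausdorff_space (mtopology_of m)" unfolding mt by (rule Hausdorff_space_mtopology)
    fix f assume f: "f \<in> \<Lambda> \<rightarrow> topspace (mtopology_of m)"
    then have fM: "f a \<in> mspace m" if "a \<in> \<Lambda>" for a using that by auto
    define bit where "bit a = (\<lambda>k. f a \<in> Bs k)" for a
    define h where "h a = HH (bit a)" for a
    have "h \<in> \<Lambda> \<rightarrow> topspace (top_of_set {0..1::real})" using HH_range by (auto simp: h_def)
    then have "\<exists>F\<in>FF. \<exists>x\<in>topspace (top_of_set {0..1::real}). rho_converges \<Omega> \<rho> (top_of_set {0..1}) h F x"
      using F01 unfolding FinBW_def by (elim conjE allE impE)
    then obtain F x0 where F: "F \<in> FF" "x0 \<in> {0..1::real}" "rho_converges \<Omega> \<rho> (top_of_set {0..1}) h F x0"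
      by auto
    have rc: "\<forall>U. openin (top_of_set {0..1}) U \<and> x0 \<in> U \<longrightarrow> (\<exists>K. finite K \<and> K \<subseteq> \<Omega> \<and> h ` \<rho> (F - K) \<subseteq> U)"
      using F(3) unfolding rho_converges_def .
    have "\<exists>K. finite K \<and> K \<subseteq> \<Omega> \<and> (\<forall>a\<in>\<rho>(F-K). \<forall>a'\<in>\<rho>(F-K). bit a k = bit a' k)" for k
    proof -
      define e :: real where "e = 1 / (2 * 3^(Suc k))"
      have e: "e > 0" unfolding e_def by simp
      have op: "openin (top_of_set {0..1}) ({0..1} \<inter> ball x0 e)" by (rule openin_open_Int) simp
      have xin: "x0 \<in> {0..1} \<inter> ball x0 e" using F(2) e by auto
      obtain K where K: "finite K" "K \<subseteq> \<Omega>" "h ` \<rho> (F - K) \<subseteq> {0..1} \<inter> ball x0 e"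
        using rc[rule_format, OF conjI[OF op xin]] by (elim exE conjE)
      have "bit a k = bit a' k" if "a \<in> \<rho>(F-K)" "a' \<in> \<rho>(F-K)" for a a'
      proof -
        have "dist x0 (h a) < e" "dist x0 (h a') < e" using K(3) that by auto
        then have "\<bar>h a - h a'\<bar> < 2 * e" by (simp add: dist_real_def)
        also have "2 * e = 1 / 3^(Suc k)" unfolding e_def by simp
        finally show ?thesis unfolding h_def by (rule cantor_agree)
      qed
      then show ?thesis using K(1,2) by blast
    qed
    then obtain KK where KK: "\<And>k. finite (KK k)" "\<And>k. KK k \<subseteq> \<Omega>"
      "\<And>k a a'. a \<in> \<rho>(F - KK k) \<Longrightarrow> a' \<in> \<rho>(F - KK k) \<Longrightarrow> bit a k = bit a' k" by metis
    define LL where "LL N = (\<Union>k<N. KK k)" for N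
    have LLfin: "finite (LL N)" for N unfolding LL_def using KK(1) by auto
    have LLsub: "LL N \<subseteq> \<Omega>" for N unfolding LL_def using KK(2) by auto
    have LLmono: "\<rho>(F - LL N) \<subseteq> \<rho>(F - KK k)" if "k < N" for k N
      by (rule rhomono) (use that F(1) Fminus KK(1) LLfin in \<open>auto simp: LL_def\<close>)
    have cover: "\<exists>c. c \<in> mspace m \<and> f ` \<rho>(F - LL (P n)) \<subseteq> mball c (1/Suc n)" for n
    proof -
      obtain a0 where a0: "a0 \<in> \<rho>(F - LL (P n))" using rho_minus_ne[OF F(1) LLfin] by blast
      have a0L: "a0 \<in> \<Lambda>" using a0 rhosub[OF Fminus[OF F(1) LLfin]] by auto
      then have "f a0 \<in> mspace m" by (rule fM)
      then obtain c where c: "c \<in> C n" "f a0 \<in> mball c (1/Suc n)" using C(3)[of n] by blast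
      have "c \<in> from_nat_into (C n) ` {..<card (C n)}"
        using bij_betw_from_nat_into_finite[OF C(1)[of n]] c(1) by (simp add: bij_betw_def)
      then obtain i where i: "i < card (C n)" "ctr n i = c" unfolding ctr_def by auto
      define k where "k = prod_encode (n,i)"
      have kP: "k < P n" unfolding k_def using P[OF i(1)] .
      have Bk: "Bs k = mball c (1/Suc n)" using i by (simp add: Bs_def k_def)
      have b0: "bit a0 k" using c(2) Bk by (simp add: bit_def)
      have "f a \<in> mball c (1/Suc n)" if "a \<in> \<rho>(F - LL (P n))" for a
      proof -
        have "bit a k = bit a0 k" using KK(3)[of a k a0] LLmono[OF kP] that a0 by blast
        then show ?thesis using b0 Bk by (simp add: bit_def)
      qed
      then show ?thesis using C(2) c(1) by blast
    qed
    then obtain cc where cc: "\<And>n. cc n \<in> mspace m" "\<And>n. f ` \<rho>(F - LL (P n)) \<subseteq> mball (cc n) (1/Suc n)"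
      by metis
    define LL' where "LL' n = (\<Union>j\<le>n. LL (P j))" for n
    have LL'fin: "finite (LL' n)" for n unfolding LL'_def using LLfin by auto
    have sub': "\<rho>(F - LL' n) \<subseteq> \<rho>(F - LL (P j))" if "j \<le> n" for j n
      by (rule rhomono) (use that F(1) Fminus LLfin LL'fin in \<open>auto simp: LL'_def\<close>)
    have "\<exists>a. a \<in> \<rho>(F - LL' n)" for n using rho_minus_ne[OF F(1) LL'fin] by blast
    then obtain aa where aa: "\<And>n. aa n \<in> \<rho>(F - LL' n)" by metis
    have aaL: "aa n \<in> \<Lambda>" for n using aa rhosub[OF Fminus[OF F(1) LL'fin]] by blast
    define p where "p n = f (aa n)" for n
    have pM: "range p \<subseteq> mspace m" unfolding p_def using fM aaL by auto
    have "\<exists>l r. l \<in> mspace m \<and> strict_mono r \<and> limitin mtopology (p \<circ> r) l sequentially"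
      using cpt unfolding mt compact_space_sequentially using pM by (elim allE impE)
    then obtain l r where l: "l \<in> mspace m" "strict_mono r" "limitin mtopology (p \<circ> r) l sequentially"
      by auto
    have conv: "rho_converges \<Omega> \<rho> (mtopology_of m) f F l" unfolding rho_converges_def mt
    proof (intro allI impI)
      fix U assume U: "openin mtopology U \<and> l \<in> U"
      then obtain \<epsilon> where \<epsilon>: "\<epsilon> > 0" "mball l \<epsilon> \<subseteq> U" using openin_mtopology by metis
      obtain n where n: "inverse (real (Suc n)) < \<epsilon> / 3" using reals_Archimedean[of "\<epsilon>/3"] \<epsilon>(1) by auto
      have "eventually (\<lambda>i. (p \<circ> r) i \<in> mspace m \<and> mdist m ((p \<circ> r) i) l < 1/Suc n) sequentially"
        using l(3) unfolding limitin_metric by (elim conjE allE impE) auto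
      then obtain N where N: "\<And>i. i \<ge> N \<Longrightarrow> mdist m (p (r i)) l < 1/Suc n"
        unfolding eventually_sequentially by auto
      define i where "i = max N n"
      have ri: "n \<le> r i" using seq_suble[OF l(2), of i] unfolding i_def by linarith
      have q1: "mdist m (p (r i)) l < 1/Suc n" using N[of i] unfolding i_def by simp
      have "aa (r i) \<in> \<rho>(F - LL (P n))" using sub'[OF ri] aa by blast
      then have q2: "p (r i) \<in> mball (cc n) (1/Suc n)" using cc(2) unfolding p_def by blast
      show "\<exists>K. finite K \<and> K \<subseteq> \<Omega> \<and> f ` \<rho> (F - K) \<subseteq> U"
      proof (intro exI conjI)
        show "finite (LL (P n))" "LL (P n) \<subseteq> \<Omega>" by (rule LLfin, rule LLsub)
        show "f ` \<rho> (F - LL (P n)) \<subseteq> U"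
        proof
          fix y assume "y \<in> f ` \<rho> (F - LL (P n))"
          then have y: "y \<in> mball (cc n) (1/Suc n)" using cc(2) by blast
          have "mdist m l y \<le> mdist m l (p (r i)) + mdist m (p (r i)) y"
            using y q2 l(1) by (intro mdist_triangle) auto
          also have "\<dots> \<le> mdist m l (p (r i)) + (mdist m (p (r i)) (cc n) + mdist m (cc n) y)"
            using y q2 by (intro add_left_mono mdist_triangle) auto
          also have "\<dots> < 1/Suc n + (1/Suc n + 1/Suc n)"
            using q1 q2 y by (intro add_strict_mono) (auto simp: mdist_commute)
          also have "\<dots> < \<epsilon>" using n by (simp add: inverse_eq_divide)
          finally have "y \<in> mball l \<epsilon>" using y l(1) by simp
          then show "y \<in> U" using \<epsilon>(2) by blast
        qed
      qed
    qed
    show "\<exists>F\<in>FF. \<exists>x\<in>topspace (mtopology_of m). rho_converges \<Omega> \<rho> (mtopology_of m) f F x"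
      using F(1) l(1) conv by auto
  qed
qed

end



definition dyM :: "nat \<Rightarrow> real \<Rightarrow> int" where
  "dyM n x = min \<lfloor>x * 2^n\<rfloor> (2^n - 1)"

definition dy :: "nat \<Rightarrow> real \<Rightarrow> real" where
  "dy n x = (2 * of_int (dyM n x) + 1) / 2^(Suc n)"

lemma dyM_bounds:
  assumes "0 \<le> x" "x \<le> 1"
  shows "0 \<le> dyM n x" "dyM n x \<le> 2^n - 1" "real_of_int (dyM n x) \<le> x * 2^n" "x * 2^n \<le> real_of_int (dyM n x) + 1"
proof -
  have p: "(1::int) \<le> 2^n" by simp
  have xn: "0 \<le> x * 2^n" "x * 2^n \<le> 2^n" using assms by (auto simp: mult_left_le_one_le)
  show "0 \<le> dyM n x" unfolding dyM_def using xn p by auto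
  show "dyM n x \<le> 2^n - 1" unfolding dyM_def by auto
  show "real_of_int (dyM n x) \<le> x * 2^n"
  proof (cases "\<lfloor>x * 2^n\<rfloor> \<le> 2^n - 1")
    case True
    then have "dyM n x = \<lfloor>x * 2^n\<rfloor>" unfolding dyM_def by simp
    then show ?thesis using of_int_floor_le[of "x * 2^n"] by simp
  next
    case False
    then have d: "dyM n x = 2^n - 1" unfolding dyM_def by simp
    from False have "2^n \<le> \<lfloor>x * 2^n\<rfloor>" by simp
    then have h: "real_of_int (2^n) \<le> x * 2^n" by (simp only: le_floor_iff)
    have e1: "real_of_int (dyM n x) = 2^n - 1" unfolding d by simp
    have e2: "real_of_int ((2::int)^n) = 2^n" by simp
    show ?thesis using e1 e2 h by linarith
  qed
  show "x * 2^n \<le> real_of_int (dyM n x) + 1"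
  proof (cases "\<lfloor>x * 2^n\<rfloor> \<le> 2^n - 1")
    case True
    then have "dyM n x = \<lfloor>x * 2^n\<rfloor>" unfolding dyM_def by simp
    then show ?thesis using real_of_int_floor_add_one_ge[of "x * 2^n"] by simp
  next
    case False
    then have "dyM n x = 2^n - 1" unfolding dyM_def by simp
    then show ?thesis using xn by simp
  qed
qed

lemma dy_Q01:
  assumes "0 \<le> x" "x \<le> 1"
  shows "dy n x \<in> Q01"
proof -
  note b = dyM_bounds[OF assms, of n]
  have "dy n x \<in> \<rat>" unfolding dy_def
    by (intro Rats_divide Rats_add Rats_mult Rats_of_int Rats_power) simp_all
  moreover have "0 \<le> dy n x" unfolding dy_def using b by simp
  moreover have "2 * real_of_int (dyM n x) + 1 \<le> 2^(Suc n)"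
  proof -
    have "real_of_int (dyM n x) \<le> real_of_int (2^n - 1)" using b(2) by (simp only: of_int_le_iff)
    then show ?thesis by simp
  qed
  then have "dy n x \<le> 1" unfolding dy_def by simp
  ultimately show ?thesis unfolding Q01_def by simp
qed

lemma dy_close:
  assumes "0 \<le> x" "x \<le> 1"
  shows "\<bar>dy n x - x\<bar> \<le> 1 / 2^n"
proof -
  note b = dyM_bounds[OF assms, of n]
  have e: "dy n x * 2^n = real_of_int (dyM n x) + 1/2" unfolding dy_def by (simp add: field_simps)
  have "\<bar>dy n x * 2^n - x * 2^n\<bar> \<le> 1" using e b(3,4) by linarith
  then have "\<bar>dy n x - x\<bar> * 2^n \<le> 1" by (simp add: abs_mult left_diff_distrib[symmetric])
  then show ?thesis by (simp add: field_simps)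
qed

lemma odd_pow_eq:
  fixes a b :: int
  assumes "(2*a+1) * 2^p = (2*b+1) * 2^q"
  shows "p = q"
proof (rule ccontr)
  have gen: False if "(2*a'+1) * 2^p' = (2*b'+1) * (2::int)^q'" "p' < q'" for a' b' :: int and p' q'
  proof -
    have "(2::int)^q' = 2^p' * 2^(q'-p')" using that(2) by (simp add: power_add[symmetric])
    with that(1) have "(2*a'+1) = (2*b'+1) * 2^(q'-p')" by simp
    moreover have "even ((2*b'+1) * (2::int)^(q'-p'))" using that(2) by simp
    ultimately have "even (2*a'+1)" by metis
    then show False by simp
  qed
  assume "p \<noteq> q"
  then consider "p < q" | "q < p" by linarith
  then show False
  proof cases
    case 1 then show False using gen[OF assms] by simp
  next
    case 2 then show False using gen[OF assms[symmetric]] by simp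
  qed
qed

lemma dy_inj:
  assumes "dy n x = dy n' x'"
  shows "n = n'"
proof -
  have "(2 * real_of_int (dyM n x) + 1) * 2^(Suc n') = (2 * real_of_int (dyM n' x') + 1) * 2^(Suc n)"
    using assms unfolding dy_def by (simp add: field_simps)
  then have "real_of_int ((2 * dyM n x + 1) * 2^(Suc n')) = real_of_int ((2 * dyM n' x' + 1) * 2^(Suc n))"
    by simp
  then have "(2 * dyM n x + 1) * 2^(Suc n') = (2 * dyM n' x' + 1) * 2^(Suc n)"
    by (simp only: of_int_eq_iff)
  then have "Suc n' = Suc n" by (rule odd_pow_eq)
  then show ?thesis by simp
qed




locale prfun_bad = prfun \<Lambda> \<Omega> FF \<rho>
  for \<Lambda> :: "'l set" and \<Omega> :: "'o set" and FF :: "'o set set" and \<rho> :: "'o set \<Rightarrow> 'l set" +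
  fixes f :: "'l \<Rightarrow> real"
  assumes f01: "f \<in> \<Lambda> \<rightarrow> {0..1}"
    and nc: "\<And>F x. F \<in> FF \<Longrightarrow> x \<in> {0..1} \<Longrightarrow> \<not> rho_converges \<Omega> \<rho> (top_of_set {0..1}) f F x"
    and PM: "P_minus \<Lambda> \<Omega> FF \<rho>"
begin

definition Z where "Z E = {y \<in> {0..1}. \<forall>\<epsilon>>0. {a \<in> \<rho> E. dist (f a) y < \<epsilon>} \<notin> I}"

lemma fin01: "a \<in> \<Lambda> \<Longrightarrow> f a \<in> {0..1}" using f01 by auto

lemma away:
  assumes E: "E \<in> FF" and C: "compact C" "C \<subseteq> {0..1}" "C \<inter> Z E = {}"
  shows "{a \<in> \<rho> E. f a \<in> C} \<in> I"
proof -
  have "\<exists>\<epsilon>. \<epsilon> > 0 \<and> {a \<in> \<rho> E. dist (f a) y < \<epsilon>} \<in> I" if "y \<in> C" for y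
  proof -
    have "y \<notin> Z E" "y \<in> {0..1}" using C(2,3) that by auto
    then show ?thesis unfolding Z_def by auto
  qed
  then obtain eps where eps: "\<And>y. y \<in> C \<Longrightarrow> eps y > 0" "\<And>y. y \<in> C \<Longrightarrow> {a \<in> \<rho> E. dist (f a) y < eps y} \<in> I"
    by metis
  have cov: "C \<subseteq> (\<Union>y\<in>C. ball y (eps y))" using eps(1) by force
  obtain D where D: "D \<subseteq> C" "finite D" "C \<subseteq> (\<Union>y\<in>D. ball y (eps y))"
    using compactE_image[OF C(1), of C "\<lambda>y. ball y (eps y)"] cov by auto
  have "{a \<in> \<rho> E. f a \<in> C} \<subseteq> \<Union> ((\<lambda>y. {a \<in> \<rho> E. dist (f a) y < eps y}) ` D)"
  proof
    fix a assume a: "a \<in> {a \<in> \<rho> E. f a \<in> C}"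
    then obtain y where "y \<in> D" "f a \<in> ball y (eps y)" using D(3) by blast
    then show "a \<in> \<Union> ((\<lambda>y. {a \<in> \<rho> E. dist (f a) y < eps y}) ` D)" using a by (auto simp: dist_commute)
  qed
  moreover have "\<Union> ((\<lambda>y. {a \<in> \<rho> E. dist (f a) y < eps y}) ` D) \<in> I"
    by (rule I_Union) (use D eps(2) in auto)
  ultimately show ?thesis using I_sub by blast
qed

lemma Z_sub: "Z E \<subseteq> {0..1}" unfolding Z_def by auto

lemma Z_ne: assumes E: "E \<in> FF" shows "Z E \<noteq> {}"
proof
  assume "Z E = {}"
  then have "{a \<in> \<rho> E. f a \<in> {0..1}} \<in> I" by (intro away[OF E]) auto
  moreover have "{a \<in> \<rho> E. f a \<in> {0..1}} = \<rho> E" using rhosub[OF E] fin01 by auto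
  ultimately show False using rho_notI[OF E] by simp
qed

lemma no_isolated:
  assumes E: "E \<in> FF" and y: "y \<in> Z E" and r: "r > 0" and iso: "Z E \<inter> ball y r \<subseteq> {y}"
  shows False
proof -
  define A where "A n = {a \<in> \<rho> E. dist (f a) y < r / (real n + 2)}" for n :: nat
  have y01: "y \<in> {0..1}" using y Z_sub[of E] by blast
  have A0L: "A 0 \<subseteq> \<Lambda>" unfolding A_def using rhosub[OF E] by auto
  have Amono: "A (Suc n) \<subseteq> A n" for n
  proof
    fix a assume "a \<in> A (Suc n)"
    moreover have "r / (real (Suc n) + 2) \<le> r / (real n + 2)" using r by (intro divide_left_mono) auto
    ultimately show "a \<in> A n" unfolding A_def by auto
  qed
  have A0I: "A 0 \<notin> I"
  proof -
    have "r / 2 > 0" using r by simp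
    then have "{a \<in> \<rho> E. dist (f a) y < r/2} \<notin> I" using y unfolding Z_def by blast
    then show ?thesis unfolding A_def by simp
  qed
  have Adiff: "A n - A (Suc n) \<in> I" for n
  proof -
    define Cn where "Cn = {0..1} \<inter> (cball y (r/(real n+2)) - ball y (r/(real n + 3)))"
    have cpt: "compact Cn" unfolding Cn_def
      by (intro compact_Int compact_Icc compact_diff compact_cball open_ball)
    have Csub: "Cn \<subseteq> {0..1}" unfolding Cn_def by auto
    have CZ: "Cn \<inter> Z E = {}"
    proof (rule ccontr)
      assume "Cn \<inter> Z E \<noteq> {}"
      then obtain z where z: "z \<in> Cn" "z \<in> Z E" by blast
      have "r/(real n+2) < r" using r by (simp add: divide_less_eq)
      then have "z \<in> ball y r" using z(1) unfolding Cn_def by auto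
      then have "z = y" using iso z(2) by blast
      moreover have "r/(real n + 3) > 0" using r by simp
      ultimately show False using z(1) unfolding Cn_def by auto
    qed
    have "A n - A (Suc n) \<subseteq> {a \<in> \<rho> E. f a \<in> Cn}"
    proof
      fix a assume a: "a \<in> A n - A (Suc n)"
      then have aE: "a \<in> \<rho> E" unfolding A_def by auto
      then have "f a \<in> {0..1}" using rhosub[OF E] fin01 by auto
      moreover have "dist (f a) y < r / (real n + 2)" "\<not> dist (f a) y < r / (real n + 3)"
        using a unfolding A_def by (auto simp: add.commute add.left_commute)
      ultimately show "a \<in> {a \<in> \<rho> E. f a \<in> Cn}" using aE unfolding Cn_def by (auto simp: dist_commute)
    qed
    moreover have "{a \<in> \<rho> E. f a \<in> Cn} \<in> I" by (rule away[OF E cpt Csub CZ])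
    ultimately show ?thesis using I_sub by blast
  qed
  have "A 0 \<subseteq> \<Lambda> \<and> (\<forall>n. A (Suc n) \<subseteq> A n) \<and> A 0 \<notin> I \<and> (\<forall>n. A n - A (Suc n) \<in> I)"
    using A0L Amono A0I Adiff by blast
  then have "\<exists>H\<in>FF. \<rho> H \<subseteq> A 0 \<and> (\<forall>n. \<exists>K. finite K \<and> K \<subseteq> \<Omega> \<and> \<rho> (H - K) \<subseteq> A n)"
    using PM unfolding P_minus_def by (elim allE impE)
  then obtain H where H: "H \<in> FF" "\<And>n. \<exists>K. finite K \<and> K \<subseteq> \<Omega> \<and> \<rho> (H - K) \<subseteq> A n" by auto
  have "rho_converges \<Omega> \<rho> (top_of_set {0..1}) f H y"
    unfolding rho_converges_def
  proof (intro allI impI)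
    fix U assume U: "openin (top_of_set {0..1}) U \<and> y \<in> U"
    then obtain T where T: "open T" "U = {0..1} \<inter> T" by (auto simp: openin_open)
    have "y \<in> T" using U T by auto
    then obtain e where e: "e > 0" "ball y e \<subseteq> T" using T(1) open_contains_ball by blast
    obtain n :: nat where n: "r / e < real n" using reals_Archimedean2 by blast
    have "r / (real n + 2) < e"
    proof -
      have "r < e * real n" using n e(1) by (simp add: divide_less_eq mult.commute)
      also have "\<dots> < e * (real n + 2)" using e(1) by simp
      finally show ?thesis by (simp add: divide_less_eq mult.commute)
    qed
    obtain K where K: "finite K" "K \<subseteq> \<Omega>" "\<rho> (H - K) \<subseteq> A n" using H(2)[of n] by (elim exE conjE)
    have "f ` \<rho> (H - K) \<subseteq> U"
    proof
      fix z assume "z \<in> f ` \<rho> (H - K)"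
      then obtain a where a: "a \<in> A n" "z = f a" using K(3) by blast
      then have "a \<in> \<rho> E" "dist (f a) y < r / (real n + 2)" unfolding A_def by auto
      then have "f a \<in> {0..1}" "dist y (f a) < e" using rhosub[OF E] fin01 \<open>r / (real n + 2) < e\<close>
        by (auto simp: dist_commute)
      then show "z \<in> U" using a(2) e(2) T(2) by auto
    qed
    then show "\<exists>K. finite K \<and> K \<subseteq> \<Omega> \<and> f ` \<rho> (H - K) \<subseteq> U" using K(1,2) by blast
  qed
  then show False using nc[OF H(1) y01] by simp
qed

lemma Z_infinite: assumes E: "E \<in> FF" shows "infinite (Z E)"
proof
  assume fin: "finite (Z E)"
  obtain y where y: "y \<in> Z E" using Z_ne[OF E] by blast
  obtain \<delta> where \<delta>: "\<delta> > 0" "\<forall>x\<in>Z E. x \<noteq> y \<longrightarrow> \<delta> \<le> dist y x"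
    using finite_set_avoid[OF fin, of y] by blast
  have "Z E \<inter> ball y \<delta> \<subseteq> {y}" using \<delta>(2) by force
  then show False using no_isolated[OF E y \<delta>(1)] by blast
qed

end



context prfun_bad begin

definition ee where "ee = to_nat_on \<Lambda>"
definition gg where "gg a = dy (ee a) (f a)"

lemma gg_Q: "a \<in> \<Lambda> \<Longrightarrow> gg a \<in> Q01"
  unfolding gg_def using fin01 dy_Q01 by auto

lemma gg_close: "a \<in> \<Lambda> \<Longrightarrow> \<bar>gg a - f a\<bar> \<le> 1 / 2^(ee a)"
  unfolding gg_def using fin01 dy_close by auto

lemma gg_inj: "inj_on gg \<Lambda>"
proof (rule inj_onI)
  fix a b assume ab: "a \<in> \<Lambda>" "b \<in> \<Lambda>" "gg a = gg b"
  have "ee a = ee b" by (rule dy_inj[of _ "f a" _ "f b"]) (use ab(3) in \<open>simp add: gg_def\<close>)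
  then show "a = b" using inj_on_to_nat_on[OF cL] ab(1,2) unfolding ee_def inj_on_def by blast
qed

lemma pick:
  assumes F: "F \<in> FF" and y: "y \<in> Z F" and d: "\<delta> > 0" and K: "finite K" "K \<subseteq> \<Omega>"
    and sa: "\<rho> F - \<rho> (F - K) \<in> I"
  shows "\<exists>a\<in>\<rho> (F - K). gg a \<noteq> y \<and> dist (gg a) y < \<delta>"
proof -
  have d2: "\<delta>/2 > 0" using d by simp
  define S1 where "S1 = {a \<in> \<rho> F. dist (f a) y < \<delta>/2}"
  have S1: "S1 \<notin> I" using y d2 unfolding Z_def S1_def by blast
  obtain N where N: "(1/2::real)^N < \<delta>/2" using real_arch_pow_inv[OF d2, of "1/2"] by auto
  define Fin where "Fin = ee -` {..<N} \<inter> \<Lambda>"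
  have "finite Fin" unfolding Fin_def ee_def by (rule finite_vimage_IntI) (auto intro: inj_on_to_nat_on[OF cL])
  then have FinI: "Fin \<in> I" by (rule I_finite) (auto simp: Fin_def)
  define G1 where "G1 = {a \<in> \<Lambda>. gg a = y}"
  have "finite G1" by (rule subsingleton_finite) (use gg_inj in \<open>auto simp: G1_def inj_on_def\<close>)
  then have G1I: "G1 \<in> I" by (rule I_finite) (auto simp: G1_def)
  have "(\<rho> F - \<rho> (F - K)) \<union> Fin \<union> G1 \<in> I" using sa FinI G1I I_Un by blast
  then have "\<not> S1 \<subseteq> (\<rho> F - \<rho> (F - K)) \<union> Fin \<union> G1" using S1 I_sub by blast
  then obtain a where a: "a \<in> S1" "a \<notin> \<rho> F - \<rho> (F - K)" "a \<notin> Fin" "a \<notin> G1" by blast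
  have aF: "a \<in> \<rho> F" and af: "dist (f a) y < \<delta>/2" using a(1) unfolding S1_def by auto
  have aL: "a \<in> \<Lambda>" using aF rhosub[OF F] by auto
  have aK: "a \<in> \<rho> (F - K)" using a(2) aF by blast
  have "N \<le> ee a" using a(3) aL unfolding Fin_def by auto
  then have "(1/2::real)^(ee a) \<le> (1/2)^N" by (intro power_decreasing) auto
  then have "\<bar>gg a - f a\<bar> < \<delta>/2" using gg_close[OF aL] N by (simp add: power_one_over)
  then have "dist (gg a) y < \<delta>" using af dist_triangle[of "gg a" y "f a"] by (simp add: dist_real_def)
  moreover have "gg a \<noteq> y" using a(4) aL unfolding G1_def by auto
  ultimately show ?thesis using aK by blast
qed

lemma not_conv:
  fixes B :: "real set" and b :: "nat \<Rightarrow> nat \<Rightarrow> real" and yy :: "nat \<Rightarrow> real"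
  assumes B: "B = (\<lambda>(k,j). b k j) ` UNIV" and yy: "inj yy"
    and b: "\<And>k j. b k j \<noteq> yy k \<and> dist (b k j) (yy k) < 1 / Suc j"
  shows "B \<notin> conv_ideal"
proof
  assume "B \<in> conv_ideal"
  then obtain S where S: "finite S" "\<And>s. s \<in> S \<Longrightarrow> (\<exists>x\<in>{0..1}. s \<longlonglongrightarrow> x)" "B \<subseteq> \<Union> (range ` S)"
    unfolding conv_ideal_def by auto
  have Slim: "s \<longlonglongrightarrow> lim s" if "s \<in> S" for s using S(2)[OF that] by (auto simp: limI)
  define X where "X = lim ` S"
  have Xfin: "finite X" unfolding X_def using S(1) by simp
  have "infinite (range yy)" using yy by (simp add: range_inj_infinite)
  then obtain k where k: "yy k \<notin> X" using Xfin by (metis finite_subset image_subsetI)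
  define y where "y = yy k"
  obtain \<delta> where \<delta>: "\<delta> > 0" "\<forall>x\<in>X. x \<noteq> y \<longrightarrow> \<delta> \<le> dist y x"
    using finite_set_avoid[OF Xfin, of y] by blast
  have \<delta>X: "\<delta> \<le> dist y x" if "x \<in> X" for x using \<delta>(2) that k y_def by auto
  define E where "E = (\<Union>s\<in>S. s ` {n. \<not> dist (s n) (lim s) < \<delta>/2})"
  have "finite {n. \<not> dist (s n) (lim s) < \<delta>/2}" if "s \<in> S" for s
  proof -
    have "eventually (\<lambda>n. dist (s n) (lim s) < \<delta>/2) sequentially"
      using tendstoD[OF Slim[OF that], of "\<delta>/2"] \<delta>(1) by simp
    then show ?thesis unfolding cofinite_eq_sequentially[symmetric] eventually_cofinite .
  qed
  then have Efin: "finite E" unfolding E_def using S(1) by blast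
  define T where "T = B \<inter> ball y (\<delta>/2)"
  have "T \<subseteq> E"
  proof
    fix q assume q: "q \<in> T"
    then have "q \<in> B" "dist y q < \<delta>/2" unfolding T_def by auto
    then obtain s n where s: "s \<in> S" "q = s n" using S(3) by blast
    have "\<not> dist (s n) (lim s) < \<delta>/2"
    proof
      assume "dist (s n) (lim s) < \<delta>/2"
      then have "dist q (lim s) < \<delta>/2" using s(2) by simp
      then have "dist y (lim s) < \<delta>" using \<open>dist y q < \<delta>/2\<close> dist_triangle[of y "lim s" q] by linarith
      moreover have "\<delta> \<le> dist y (lim s)" using \<delta>X s(1) unfolding X_def by blast
      ultimately show False by simp
    qed
    then show "q \<in> E" unfolding E_def using s by blast
  qed
  then have Tfin: "finite T" using Efin finite_subset by blast
  obtain \<delta>' where \<delta>': "\<delta>' > 0" "\<forall>t\<in>T. t \<noteq> y \<longrightarrow> \<delta>' \<le> dist y t"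
    using finite_set_avoid[OF Tfin, of y] by blast
  have "min (\<delta>/2) \<delta>' > 0" using \<delta>(1) \<delta>'(1) by simp
  then obtain j where j: "inverse (real (Suc j)) < min (\<delta>/2) \<delta>'" using reals_Archimedean by blast
  have bq: "b k j \<noteq> y" "dist (b k j) y < 1 / Suc j" using b[of k j] unfolding y_def by auto
  have "b k j \<in> B" unfolding B by auto
  moreover have "dist y (b k j) < \<delta>/2" using bq(2) j by (simp add: dist_commute inverse_eq_divide)
  ultimately have "b k j \<in> T" unfolding T_def by auto
  then have "\<delta>' \<le> dist y (b k j)" using \<delta>'(2) bq(1) by auto
  moreover have "dist y (b k j) < \<delta>'" using bq(2) j by (simp add: dist_commute inverse_eq_divide)
  ultimately show False by simp
qed

lemma katetov:
  assumes SA: "small_accretions \<Lambda> \<Omega> FF \<rho>"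
  shows "katetov_le Q01 Q01 conv_plus rho_conv \<Lambda> \<Omega> FF \<rho>"
  unfolding katetov_le_def
proof (intro exI conjI ballI allI impI)
  show "gg \<in> \<Lambda> \<rightarrow> Q01" using gg_Q by auto
  fix F1 assume F1: "F1 \<in> FF"
  obtain F' where F': "F' \<in> FF" "F' \<subseteq> F1" "\<And>K. finite K \<and> K \<subseteq> \<Omega> \<Longrightarrow> \<rho> F' - \<rho> (F' - K) \<in> I"
    using SA F1 unfolding small_accretions_def by (elim ballE bexE conjE) auto
  define w where "w = from_nat_into \<Omega>"
  have One: "\<Omega> \<noteq> {}" using iO by auto
  define LL where "LL n = w ` {..<n}" for n
  have LLfin: "finite (LL n)" for n unfolding LL_def by simp
  have LLsub: "LL n \<subseteq> \<Omega>" for n unfolding LL_def w_def using from_nat_into[OF One] by auto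
  have LLmono: "LL n \<subseteq> LL n'" if "n \<le> n'" for n n' unfolding LL_def using that by auto
  have LLcov: "\<exists>n. K \<subseteq> LL n" if hK: "finite K" "K \<subseteq> \<Omega>" for K
  proof -
    obtain n where n: "to_nat_on \<Omega> ` K \<subseteq> {..<n}" using finite_nat_bounded[OF finite_imageI[OF hK(1)]] by blast
    have "K \<subseteq> LL n"
    proof
      fix x assume "x \<in> K"
      then have "x = w (to_nat_on \<Omega> x)" "to_nat_on \<Omega> x < n" using hK(2) n cO unfolding w_def by auto
      then show "x \<in> LL n" unfolding LL_def by blast
    qed
    then show ?thesis by blast
  qed
  have rmono: "\<rho> (F' - LL n') \<subseteq> \<rho> (F' - LL n)" if "n \<le> n'" for n n'
    by (rule rhomono) (use F'(1) Fminus LLfin LLmono[OF that] in auto)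
  have infZ: "infinite (Z F')" by (rule Z_infinite[OF F'(1)])
  obtain yy :: "nat \<Rightarrow> real" where yy: "inj yy" "range yy \<subseteq> Z F'"
    using infinite_countable_subset[OF infZ] by blast
  have "\<exists>q. q \<in> gg ` \<rho> (F' - LL (max k j)) \<and> q \<noteq> yy k \<and> dist q (yy k) < 1 / Suc j" for k j
  proof -
    have "\<exists>a\<in>\<rho> (F' - LL (max k j)). gg a \<noteq> yy k \<and> dist (gg a) (yy k) < 1 / Suc j"
      by (rule pick[OF F'(1)]) (use yy(2) LLfin LLsub F'(3) in auto)
    then show ?thesis by blast
  qed
  then obtain b where b: "\<And>k j. b k j \<in> gg ` \<rho> (F' - LL (max k j))"
    "\<And>k j. b k j \<noteq> yy k \<and> dist (b k j) (yy k) < 1 / Suc j" by metis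
  define B where "B = (\<lambda>(k,j). b k j) ` UNIV"
  have BQ: "B \<subseteq> Q01"
  proof
    fix q assume "q \<in> B"
    then obtain k j where "q = b k j" unfolding B_def by auto
    then obtain a where "a \<in> \<rho> (F' - LL (max k j))" "q = gg a" using b(1) by blast
    then show "q \<in> Q01" using gg_Q rhosub[OF Fminus[OF F'(1) LLfin]] by blast
  qed
  have Bnc: "B \<notin> conv_ideal" by (rule not_conv[OF B_def yy(1) b(2)])
  show "\<exists>F2\<in>conv_plus. \<forall>K1. finite K1 \<and> K1 \<subseteq> \<Omega> \<longrightarrow>
           (\<exists>K2. finite K2 \<and> K2 \<subseteq> Q01 \<and> rho_conv (F2 - K2) \<subseteq> gg ` \<rho> (F1 - K1))"
  proof (intro bexI allI impI)
    show "B \<in> conv_plus" unfolding conv_plus_def using BQ Bnc by auto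
    fix K1 assume K1: "finite K1 \<and> K1 \<subseteq> \<Omega>"
    then obtain n where n: "K1 \<subseteq> LL n" using LLcov by blast
    define K2 where "K2 = B - gg ` \<rho> (F' - LL n)"
    have "K2 \<subseteq> (\<lambda>(k,j). b k j) ` ({..<n} \<times> {..<n})"
    proof
      fix q assume q: "q \<in> K2"
      then obtain k j where kj: "q = b k j" unfolding K2_def B_def by auto
      have "k < n \<and> j < n"
      proof (rule ccontr)
        assume "\<not> (k < n \<and> j < n)"
        then have "n \<le> max k j" by auto
        then have "q \<in> gg ` \<rho> (F' - LL n)" using b(1)[of k j] rmono kj by blast
        then show False using q unfolding K2_def by blast
      qed
      then show "q \<in> (\<lambda>(k,j). b k j) ` ({..<n} \<times> {..<n})" using kj by force
    qed
    then have K2fin: "finite K2" by (rule finite_subset) simp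
    have "\<rho> (F' - LL n) \<subseteq> \<rho> (F1 - K1)"
      by (rule rhomono) (use F'(1,2) F1 Fminus LLfin K1 n in auto)
    then have "rho_conv (B - K2) \<subseteq> gg ` \<rho> (F1 - K1)" unfolding rho_conv_def K2_def by blast
    then show "\<exists>K2. finite K2 \<and> K2 \<subseteq> Q01 \<and> rho_conv (B - K2) \<subseteq> gg ` \<rho> (F1 - K1)"
      using K2fin BQ unfolding K2_def by blast
  qed
qed

end



context prfun begin

lemma Pminus_FinBW01:
  assumes PM: "P_minus \<Lambda> \<Omega> FF \<rho>" and SA: "small_accretions \<Lambda> \<Omega> FF \<rho>"
    and NK: "\<not> katetov_le Q01 Q01 conv_plus rho_conv \<Lambda> \<Omega> FF \<rho>"
  shows "FinBW \<Lambda> \<Omega> FF \<rho> (top_of_set {0..1::real})"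
proof (rule ccontr)
  assume nF: "\<not> FinBW \<Lambda> \<Omega> FF \<rho> (top_of_set {0..1::real})"
  have H: "Hausdorff_space (top_of_set {0..1::real})"
    by (rule Hausdorff_space_subtopology) simp
  from nF H obtain f where f: "f \<in> \<Lambda> \<rightarrow> {0..1::real}"
    and nc: "\<forall>F\<in>FF. \<forall>x\<in>{0..1}. \<not> rho_converges \<Omega> \<rho> (top_of_set {0..1}) f F x"
    unfolding FinBW_def by auto
  interpret B: prfun_bad \<Lambda> \<Omega> FF \<rho> f
    by unfold_locales (use hprf f nc PM in auto)
  show False using B.katetov[OF SA] NK by simp
qed

end

theorem theorem6p2:
  fixes \<Lambda> :: "'l set" and \<Omega> :: "'o set" and FF :: "'o set set" and \<rho> :: "'o set \<Rightarrow> 'l set"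
  assumes hprf: "partition_regular \<Lambda> \<Omega> FF \<rho>"
    and hsa: "small_accretions \<Lambda> \<Omega> FF \<rho>"
  shows
    "(FinBW \<Lambda> \<Omega> FF \<rho> (top_of_set {0..1::real}) \<longrightarrow> FinBW_metric_compact \<Lambda> \<Omega> FF \<rho> TYPE('a))
     \<and> (FinBW_metric_compact \<Lambda> \<Omega> FF \<rho> TYPE(real) \<longrightarrow> FinBW \<Lambda> \<Omega> FF \<rho> (top_of_set {0..1::real}))
     \<and> (FinBW_metric_compact \<Lambda> \<Omega> FF \<rho> TYPE(real) \<longrightarrow> \<not> katetov_le Q01 Q01 conv_plus rho_conv \<Lambda> \<Omega> FF \<rho>)
     \<and> (FinBW \<Lambda> \<Omega> FF \<rho> (top_of_set {0..1::real}) \<longrightarrow> \<not> katetov_le Q01 Q01 conv_plus rho_conv \<Lambda> \<Omega> FF \<rho>)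
     \<and> (P_minus \<Lambda> \<Omega> FF \<rho> \<longrightarrow> \<not> katetov_le Q01 Q01 conv_plus rho_conv \<Lambda> \<Omega> FF \<rho>
          \<longrightarrow> FinBW \<Lambda> \<Omega> FF \<rho> (top_of_set {0..1::real}) \<and> FinBW_metric_compact \<Lambda> \<Omega> FF \<rho> TYPE('a))"
proof -
  interpret P: prfun \<Lambda> \<Omega> FF \<rho> by unfold_locales (rule hprf)
  have I1: "FinBW \<Lambda> \<Omega> FF \<rho> (top_of_set {0..1::real}) \<Longrightarrow> FinBW_metric_compact \<Lambda> \<Omega> FF \<rho> TYPE('a)"
    unfolding FinBW_metric_compact_def using P.FinBW_imp_compact P.compact_FinBW by blast
  have I2: "FinBW_metric_compact \<Lambda> \<Omega> FF \<rho> TYPE(real) \<Longrightarrow> FinBW \<Lambda> \<Omega> FF \<rho> (top_of_set {0..1::real})"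
    by (rule metric_compact_real_imp_01)
  show ?thesis
    using I1 I2 P.FinBW01_not_katetov P.Pminus_FinBW01[OF _ hsa] by blast
qed



end
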